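(* Let $\lambda\ge0$ and $J_\lambda(\theta)=\lambda\theta-(\lambda-1)\frac{1-F(\theta)}{f(\theta)}$, and assume $J_\lambda$ is nondecreasing on $\Theta$. Then for every $\theta_0\in[0,\bar\theta)$, the function $s(\theta)=F(\theta)$ on $[\theta_0,\bar\theta]$ maximizes $\int_{\theta_0}^{\bar\theta}J_\lambda(\theta)s(\theta)\,dF(\theta)$ over $s\in\mathcal S(\theta_0)$. Consequently, with the participation cutoff $\theta_0$ fixed and the cutoff type's payoff fixed (as it is under the nonnegative-price constraint), the social welfare $W_S=\int_{\theta_0}^{\bar\theta}(\lambda p(\theta)+U(\theta))\,dF(\theta)$ is maximized by full separation of participants.
   Context: Let $0<\bar\theta<\infty$, $\Theta=[0,\bar\theta]$, $F$ a cdf on $\Theta$ with continuous, strictly positive density $f$, $dF=f\,d\theta$. For $\theta_0\in[0,\bar\theta)$ and bounded measurable $a,b$ on $[\theta_0,\bar\theta]$, write $b\in\mathrm{MPS}(a)$ if $\int_x^{\bar\theta}b\,dF\le\int_x^{\bar\theta}a\,dF$ for all $x\in[\theta_0,\bar\theta]$, with equality at $x=\theta_0$. $\mathcal S(\theta_0)$ is the set of nondecreasing $s:[\theta_0,\bar\theta]\to[0,1]$ with $s\in\mathrm{MPS}(F)$. In an incentive-compatible mechanism with cutoff $\theta_0$, interim status $s$ and prices $p$, a participant's payoff is $U(\theta)=\theta s(\theta)-p(\theta)+v(\theta)$ with $v$ twice differentiable, $v'\ge0$, $v''\le0$, and $U(\theta)=U(\theta_0)+\int_{\theta_0}^\theta(s(x)+v'(x))dx$;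 then $W_S=\int_{\theta_0}^{\bar\theta}J_\lambda s\,dF+C$ where $C$ depends only on $\theta_0$, $U(\theta_0)$, $v$, $F$, $\lambda$. *)

theory Defs
  imports "HOL-Analysis.Analysis"
begin

text \<open>Integration against dF = f d\<theta> on [x, \<theta>bar] is the integral of (g * f) over {x..\<theta>bar}.\<close>

definition MPS :: "(real \<Rightarrow> real) \<Rightarrow> real \<Rightarrow> real \<Rightarrow> (real \<Rightarrow> real) \<Rightarrow> (real \<Rightarrow> real) \<Rightarrow> bool" where
  "MPS f \<theta>0 \<theta>bar a b \<longleftrightarrow>
     (\<forall>x\<in>{\<theta>0..\<theta>bar}. integral {x..\<theta>bar} (\<lambda>t. b t * f t) \<le> integral {x..\<theta>bar} (\<lambda>t. a t * f t))
     \<and> integral {\<theta>0..\<theta>bar} (\<lambda>t. b t * f t) = integral {\<theta>0..\<theta>bar} (\<lambda>t. a t * f t)"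

definition Sset :: "(real \<Rightarrow> real) \<Rightarrow> (real \<Rightarrow> real) \<Rightarrow> real \<Rightarrow> real \<Rightarrow> (real \<Rightarrow> real) set" where
  "Sset F f \<theta>0 \<theta>bar = {s. mono_on {\<theta>0..\<theta>bar} s \<and> (\<forall>t\<in>{\<theta>0..\<theta>bar}. 0 \<le> s t \<and> s t \<le> 1)
                          \<and> MPS f \<theta>0 \<theta>bar F s}"

definition Jlam :: "real \<Rightarrow> (real \<Rightarrow> real) \<Rightarrow> (real \<Rightarrow> real) \<Rightarrow> real \<Rightarrow> real" where
  "Jlam lam F f \<theta> = lam * \<theta> - (lam - 1) * (1 - F \<theta>) / f \<theta>"

end

theory Submission
  imports Defs
begin

lemma mono_integrable:
  fixes g h :: "real \<Rightarrow> real"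
  assumes "h integrable_on {a..b}" "a \<le> b" "mono_on {a..b} g"
  shows "(\<lambda>x. g x * h x) integrable_on {a..b}"
proof -
  have m: "\<And>x y. \<lbrakk>a \<le> x; x \<le> y; y \<le> b\<rbrakk> \<Longrightarrow> g x \<le> g y"
    using assms(3) by (auto simp: mono_on_def)
  obtain c where "((\<lambda>x. g x * h x) has_integral (g a * integral {a..c} h + g b * integral {c..b} h)) {a..b}"
    using second_mean_value_theorem_full[where g=g, OF assms(1,2) m] by blast
  thus ?thesis by blast
qed

theorem proposition5:
  fixes F f :: "real \<Rightarrow> real" and \<theta>bar lam :: real
  assumes thbar: "0 < \<theta>bar"
    and f_cont: "continuous_on {0..\<theta>bar} f"
    and f_pos: "\<forall>t\<in>{0..\<theta>bar}. 0 < f t"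
    and F_dens: "\<forall>x\<in>{0..\<theta>bar}. F x = integral {0..x} f"
    and F_top: "F \<theta>bar = 1"
    and lam: "0 \<le> lam"
    and J_mono: "mono_on {0..\<theta>bar} (Jlam lam F f)"
  shows "\<forall>\<theta>0\<in>{0..<\<theta>bar}.
           F \<in> Sset F f \<theta>0 \<theta>bar \<and>
           (\<forall>s\<in>Sset F f \<theta>0 \<theta>bar.
              integral {\<theta>0..\<theta>bar} (\<lambda>t. Jlam lam F f t * s t * f t)
                \<le> integral {\<theta>0..\<theta>bar} (\<lambda>t. Jlam lam F f t * F t * f t))"
proof
  fix a assume a: "a \<in> {0..<\<theta>bar}"
  let ?J = "Jlam lam F f"
  have fint: "\<And>x y. 0 \<le> x \<Longrightarrow> y \<le> \<theta>bar \<Longrightarrow> f integrable_on {x..y}"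
    by (rule integrable_continuous_interval, rule continuous_on_subset[OF f_cont]) auto
  have Fmono0: "mono_on {0..\<theta>bar} F"
  proof (rule mono_onI)
    fix x y assume xy: "x \<in> {0..\<theta>bar}" "y \<in> {0..\<theta>bar}" "x \<le> y"
    have "integral {0..x} f \<le> integral {0..y} f"
      by (rule integral_subset_le) (use xy f_pos fint in \<open>auto simp: less_imp_le\<close>)
    thus "F x \<le> F y" using F_dens xy by auto
  qed
  have F0: "F 0 = 0" using F_dens thbar by auto
  have Fmono: "mono_on {a..\<theta>bar} F" using Fmono0 a by (auto simp: mono_on_def)
  have Fb: "\<forall>t\<in>{a..\<theta>bar}. 0 \<le> F t \<and> F t \<le> 1"
  proof
    fix t assume t: "t \<in> {a..\<theta>bar}"
    have "F 0 \<le> F t" "F t \<le> F \<theta>bar" using Fmono0 t a by (auto simp: mono_on_def)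
    thus "0 \<le> F t \<and> F t \<le> 1" using F0 F_top by auto
  qed
  have FS: "F \<in> Sset F f a \<theta>bar"
    unfolding Sset_def MPS_def using Fmono Fb by auto
  have ab: "a \<le> \<theta>bar" using a by auto
  have fa: "f integrable_on {a..\<theta>bar}" using fint a by auto
  have Jm: "mono_on {a..\<theta>bar} ?J" using J_mono a by (auto simp: mono_on_def)
  have Jle: "\<And>x y. \<lbrakk>a \<le> x; x \<le> y; y \<le> \<theta>bar\<rbrakk> \<Longrightarrow> ?J x \<le> ?J y"
    using Jm by (auto simp: mono_on_def)
  show "F \<in> Sset F f a \<theta>bar \<and>
           (\<forall>s\<in>Sset F f a \<theta>bar.
              integral {a..\<theta>bar} (\<lambda>t. ?J t * s t * f t)
                \<le> integral {a..\<theta>bar} (\<lambda>t. ?J t * F t * f t))"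
  proof (intro conjI ballI FS)
    fix s assume s: "s \<in> Sset F f a \<theta>bar"
    have sm: "mono_on {a..\<theta>bar} s" and mps: "MPS f a \<theta>bar F s"
      using s by (auto simp: Sset_def)
    have sf: "(\<lambda>t. s t * f t) integrable_on {a..\<theta>bar}"
      by (rule mono_integrable[OF fa ab sm])
    have Ff: "(\<lambda>t. F t * f t) integrable_on {a..\<theta>bar}"
      by (rule mono_integrable[OF fa ab Fmono])
    define g where "g t = F t * f t - s t * f t" for t
    have gi: "g integrable_on {a..\<theta>bar}" unfolding g_def using sf Ff by (rule integrable_diff[rotated])
    have gsub: "\<And>x y. a \<le> x \<Longrightarrow> y \<le> \<theta>bar \<Longrightarrow> integral {x..y} g = integral {x..y} (\<lambda>t. F t * f t) - integral {x..y} (\<lambda>t. s t * f t)"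
      unfolding g_def
      by (rule integral_diff) (use integrable_on_subinterval[OF Ff] integrable_on_subinterval[OF sf] in auto)
    have D: "\<And>x. x \<in> {a..\<theta>bar} \<Longrightarrow> integral {x..\<theta>bar} g \<ge> 0"
      using mps gsub unfolding MPS_def by force
    have D0: "integral {a..\<theta>bar} g = 0" using mps gsub[of a \<theta>bar] unfolding MPS_def by auto
    obtain c where c: "c \<in> {a..\<theta>bar}"
      and hi: "((\<lambda>x. ?J x * g x) has_integral (?J a * integral {a..c} g + ?J \<theta>bar * integral {c..\<theta>bar} g)) {a..\<theta>bar}"
      using second_mean_value_theorem_full[where g="?J", OF gi ab Jle] by blast
    have comb: "integral {a..c} g + integral {c..\<theta>bar} g = 0"
      using Henstock_Kurzweil_Integration.integral_combine[where a=a and c=c and b="\<theta>bar" and f=g] c gi D0 by auto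
    have "?J a * integral {a..c} g + ?J \<theta>bar * integral {c..\<theta>bar} g = (?J \<theta>bar - ?J a) * integral {c..\<theta>bar} g"
      using comb by (simp add: algebra_simps eq_neg_iff_add_eq_0[symmetric])
    also have "\<dots> \<ge> 0" using Jle[of a \<theta>bar] ab D[OF c] by simp
    finally have pos: "integral {a..\<theta>bar} (\<lambda>x. ?J x * g x) \<ge> 0" using integral_unique[OF hi] by simp
    have i1: "(\<lambda>t. ?J t * (s t * f t)) integrable_on {a..\<theta>bar}" by (rule mono_integrable[OF sf ab Jm])
    have i2: "(\<lambda>t. ?J t * (F t * f t)) integrable_on {a..\<theta>bar}" by (rule mono_integrable[OF Ff ab Jm])
    have "integral {a..\<theta>bar} (\<lambda>x. ?J x * g x) = integral {a..\<theta>bar} (\<lambda>t. ?J t * (F t * f t)) - integral {a..\<theta>bar} (\<lambda>t. ?J t * (s t * f t))"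
      unfolding g_def right_diff_distrib by (rule integral_diff[OF i2 i1])
    with pos show "integral {a..\<theta>bar} (\<lambda>t. ?J t * s t * f t) \<le> integral {a..\<theta>bar} (\<lambda>t. ?J t * F t * f t)"
      by (simp add: mult.assoc)
  qed
qed

end
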